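(* Let $\alpha_a$ be a labeled dGL hybrid game. If $S$ is an inductive Angelic subvalue map for $\alpha_a$, then $S$ is an Angelic subvalue map for $\alpha_a$, i.e. $\models S(b)\rightarrow\langle\mathrm{suffix}_b(\alpha_a)\rangle S(\mathsf{end})$ for every $b\in\mathrm{nodes}(\alpha_a)$. Dually, if $S$ is an inductive Demonic subvalue map for $\alpha_a$, then $S$ is a Demonic subvalue map for $\alpha_a$, i.e. $\models S(b)\rightarrow[\mathrm{suffix}_b(\alpha_a)] S(\mathsf{end})$ for every $b\in\mathrm{nodes}(\alpha_a)$.
   Context: Differential game logic (dGL). Hybrid games are generated by $\alpha,\beta ::= x:=e \mid \alpha;\beta \mid ?Q \mid \{x'=f(x)\,\&\,Q\} \mid \alpha^{*} \mid \alpha\cup\beta \mid x:=* \mid\ !Q \mid \{x'=f(x)\,\&\,Q\}^{d} \mid \alpha^{\times} \mid \alpha\cap\beta \mid x:=\otimes$, with $x$ a real variable (vector for ODEs), $e,f(x)$ polynomial terms, $Q$ a formula. Players Angel and Demon: $x:=e$ deterministic assignment; in $x:=*$ Angel (in $x:=\otimes$ Demon) assigns any real to $x$; in $\{x'=f(x)\&Q\}$ Angel (in $\{x'=f(x)\&Q\}^d$ Demon) chooses a duration $r\ge 0$ of following the ODE with $Q$ true throughout; $?Q$ makes Angel lose and $!Q$ makes Demon lose if $Q$ is false; in $\alpha\cup\beta$ Angel (in $\alpha\cap\beta$ Demon) chooses the branch; in $\alpha^*$ Angel (in $\alpha^\times$ Demon) decides before each iteration whether to repeat or stop; $\alpha;\beta$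 is sequential composition. Formulas: polynomial (in)equalities closed under connectives, real quantifiers, and modalities $\langle\alpha\rangle\varphi$ (Angel has a winning strategy in $\alpha$ to reach $\varphi$ whatever Demon does) and $[\alpha]\varphi\equiv\neg\langle\alpha\rangle\neg\varphi$ (Demon has one), with the standard dGL winning-region semantics ($\langle x:=*\rangle\varphi\leftrightarrow\exists x\varphi$, $\langle x:=\otimes\rangle\varphi\leftrightarrow\forall x\varphi$, $\langle ?Q\rangle\varphi\leftrightarrow Q\wedge\varphi$, $\langle !Q\rangle\varphi\leftrightarrow(Q\rightarrow\varphi)$, $\langle\alpha\cup\beta\rangle\varphi\leftrightarrow\langle\alpha\rangle\varphi\vee\langle\beta\rangle\varphi$, $\langle\alpha\cap\beta\rangle\varphi\leftrightarrow\langle\alpha\rangle\varphi\wedge\langle\beta\rangle\varphi$, $\langle\alpha;\beta\rangle\varphi\leftrightarrow\langle\alpha\rangle\langle\beta\rangle\varphi$, Angel ODE: some duration/solution staying in $Q$ reaches $\varphi$, Demon ODE: all do; $\langle\alpha^*\rangle$ least fixed point, $\langle\alpha^\times\rangle$ greatest fixed point of the respective winning-region equations). $\models\psi$ means $\psi$ is valid. Labels. Every node of the syntax tree carries a unique label; $\alpha_a$ has root label $a$; $\mathrm{nodes}(\alpha_a)$ is the set of labels of its subgames (including $a$); a special label $\mathsf{end}\notin\mathrm{nodes}(\alpha_a)$. A map $S$ assigns formulas to a label set containing $\mathrm{nodes}(\alpha_a)\cup\{\mathsf{end}\}$; $S\{\mathsf{end}\mapsto Q\}$ replaces the value at $\mathsf{end}$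 by $Q$. $\gamma_g,\delta_d$ denote immediate subgames with root labels $g,d$. Game suffix: $\mathrm{suffix}_a(\alpha_a)=\alpha_a$; for $b\ne a$: for loops $((\gamma_g)^* )_a,((\gamma_g)^\times)_a$ it is $\mathrm{suffix}_b(\gamma_g);\alpha_a$; for $\cup,\cap$ the suffix in the branch containing $b$; for $(\gamma_g;\delta_d)_a$ it is $\mathrm{suffix}_b(\gamma_g);\delta_d$ if $b\in\mathrm{nodes}(\gamma_g)$, else $\mathrm{suffix}_b(\delta_d)$. Angelic (resp. Demonic) subvalue map: $\models S(b)\rightarrow\langle\mathrm{suffix}_b(\alpha_a)\rangle S(\mathsf{end})$ (resp. $\models S(b)\rightarrow[\mathrm{suffix}_b(\alpha_a)]S(\mathsf{end})$) for all $b\in\mathrm{nodes}(\alpha_a)$. Angelic existential projection $\mathcal{P}(\alpha_a,S)$: $(x:=* )_a\mapsto(x:=* )_a;?S(\mathsf{end})$; $\{x'=f(x)\&Q\}_a\mapsto\{x'=f(x)\&Q\}_a;?S(\mathsf{end})$; $(\gamma_g\cup\delta_d)_a\mapsto(?S(g);\mathcal{P}(\gamma_g,S))\cup(?S(d);\mathcal{P}(\delta_d,S))$; $((\gamma_g)^* )_a\mapsto(?S(g);\mathcal{P}(\gamma_g,S\{\mathsf{end}\mapsto S(a)\}))^*;?S(\mathsf{end})$; $(\gamma_g;\delta_d)_a\mapsto\mathcal{P}(\gamma_g,S\{\mathsf{end}\mapsto S(d)\});\mathcal{P}(\delta_d,S)$; $\cap\mapsto\mathcal{P}(\gamma_g,S)\cap\mathcal{P}(\delta_d,S)$;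 $((\gamma_g)^\times)_a\mapsto\mathcal{P}(\gamma_g,S\{\mathsf{end}\mapsto S(a)\})^\times$; $x:=e,x:=\otimes,?Q,!Q$, Demon ODE unchanged (labels preserved, new nodes fresh labels). Demonic existential projection $\mathcal{D}(\alpha_a,S)$: $(x:=\otimes)_a\mapsto(x:=\otimes)_a;!S(\mathsf{end})$; $(\{x'=f(x)\&Q\}^d)_a\mapsto(\{x'=f(x)\&Q\}^d)_a;!S(\mathsf{end})$; $(\gamma_g\cap\delta_d)_a\mapsto(!S(g);\mathcal{D}(\gamma_g,S))\cap(!S(d);\mathcal{D}(\delta_d,S))$; $((\gamma_g)^\times)_a\mapsto(!S(g);\mathcal{D}(\gamma_g,S\{\mathsf{end}\mapsto S(g)\vee S(\mathsf{end})\}))^\times;!S(\mathsf{end})$; $(\gamma_g;\delta_d)_a\mapsto\mathcal{D}(\gamma_g,S\{\mathsf{end}\mapsto S(d)\});\mathcal{D}(\delta_d,S)$; $(\gamma_g\cup\delta_d)_a\mapsto\mathcal{D}(\gamma_g,S)\cup\mathcal{D}(\delta_d,S)$; $((\gamma_g)^* )_a\mapsto\mathcal{D}(\gamma_g,S\{\mathsf{end}\mapsto S(a)\})^*$; $x:=e,x:=*,?Q,!Q$, Angel ODE unchanged (labels preserved, new nodes fresh labels). Inductive Angelic subvalue map ($S\Vdash\alpha_a$), recursively: atomic $\alpha$ (assignments of all three kinds, tests, both ODE kinds): $\models S(a)\rightarrow\langle\alpha\rangle S(\mathsf{end})$; $(\gamma_g\cup\delta_d)_a$: $\models S(a)\rightarrow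 S(g)\vee S(d)$, $S\Vdash\gamma_g$, $S\Vdash\delta_d$; $(\gamma_g\cap\delta_d)_a$: $\models S(a)\rightarrow S(g)\wedge S(d)$ and both; $(\gamma_g;\delta_d)_a$: $\models S(a)\rightarrow S(g)$, $S\{\mathsf{end}\mapsto S(d)\}\Vdash\gamma_g$, $S\Vdash\delta_d$; $((\gamma_g)^* )_a$: $\models S(a)\rightarrow\langle\mathcal{P}(\alpha_a,S)\rangle S(\mathsf{end})$ and $S\{\mathsf{end}\mapsto S(a)\}\Vdash\gamma_g$; $((\gamma_g)^\times)_a$: $\models S(a)\rightarrow S(g)\wedge S(\mathsf{end})$ and $S\{\mathsf{end}\mapsto S(a)\}\Vdash\gamma_g$. Inductive Demonic subvalue map, recursively: atomic: $\models S(a)\rightarrow[\alpha]S(\mathsf{end})$; $\cup$: $\models S(a)\rightarrow S(g)\wedge S(d)$ and recursively for both; $\cap$: $\models S(a)\rightarrow S(g)\vee S(d)$ and both; $;$: $\models S(a)\rightarrow S(g)$, $S\{\mathsf{end}\mapsto S(d)\}$ for $\gamma_g$, $S$ for $\delta_d$; $((\gamma_g)^* )_a$: $\models S(a)\rightarrow S(\mathsf{end})\wedge S(g)$ and $S\{\mathsf{end}\mapsto S(a)\}$ for $\gamma_g$; $((\gamma_g)^\times)_a$: $\models S(a)\rightarrow[\mathcal{D}(\alpha_a,S)]S(\mathsf{end})$ and $S\{\mathsf{end}\mapsto S(a)\}$ for $\gamma_g$. *)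

theory Defs
  imports "HOL-Analysis.Analysis"
begin

type_synonym var = nat
type_synonym state = "var \<Rightarrow> real"

datatype trm = TVar var | TConst real | TNeg trm | TPlus trm trm | TTimes trm trm

text \<open>Unlabelled hybrid games and formulas (mutually recursive).
  An ODE system is a list of pairs (x_i, f_i(x)) meaning x_i' = f_i(x).\<close>
datatype game =
    Assign var trm
  | AssignAny var
  | AssignDemon var
  | Test fml
  | DTest fml
  | ODE "(var \<times> trm) list" fml
  | DODE "(var \<times> trm) list" fml
  | Choice game game
  | DChoice game game
  | Seq game game
  | Loop game
  | DLoop game
and fml =
    FGeq trm trm | FGt trm trm | FEq trm trm
  | FNot fml | FAnd fml fml | FOr fml fml
  | FExists var fml | FForall var fml
  | FDia game fml

definition Imp :: "fml \<Rightarrow> fml \<Rightarrow> fml" where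
  "Imp p q = FOr (FNot p) q"

definition Box :: "game \<Rightarrow> fml \<Rightarrow> fml" where
  "Box \<alpha> p = FNot (FDia \<alpha> (FNot p))"

primrec tsem :: "trm \<Rightarrow> state \<Rightarrow> real" where
  "tsem (TVar x) \<nu> = \<nu> x"
| "tsem (TConst c) \<nu> = c"
| "tsem (TNeg e) \<nu> = - tsem e \<nu>"
| "tsem (TPlus e1 e2) \<nu> = tsem e1 \<nu> + tsem e2 \<nu>"
| "tsem (TTimes e1 e2) \<nu> = tsem e1 \<nu> * tsem e2 \<nu>"

definition ode_sol :: "(var \<times> trm) list \<Rightarrow> state set \<Rightarrow> state \<Rightarrow> real \<Rightarrow> (real \<Rightarrow> state) \<Rightarrow> bool" where
  "ode_sol ode Q \<nu> r \<phi> \<longleftrightarrow>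
     r \<ge> 0 \<and> \<phi> 0 = \<nu> \<and>
     (\<forall>t\<in>{0..r}. \<phi> t \<in> Q \<and>
        (\<forall>y. y \<notin> fst ` set ode \<longrightarrow> \<phi> t y = \<nu> y) \<and>
        (\<forall>(x, f)\<in>set ode. ((\<lambda>s. \<phi> s x) has_real_derivative tsem f (\<phi> t)) (at t within {0..r})))"

primrec win :: "game \<Rightarrow> state set \<Rightarrow> state set" and fsem :: "fml \<Rightarrow> state set" where
  "win (Assign x e) X = {\<nu>. \<nu>(x := tsem e \<nu>) \<in> X}"
| "win (AssignAny x) X = {\<nu>. \<exists>v. \<nu>(x := v) \<in> X}"
| "win (AssignDemon x) X = {\<nu>. \<forall>v. \<nu>(x := v) \<in> X}"
| "win (Test Q) X = fsem Q \<inter> X"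
| "win (DTest Q) X = {\<nu>. \<nu> \<in> fsem Q \<longrightarrow> \<nu> \<in> X}"
| "win (ODE ode Q) X = {\<nu>. \<exists>r \<phi>. ode_sol ode (fsem Q) \<nu> r \<phi> \<and> \<phi> r \<in> X}"
| "win (DODE ode Q) X = {\<nu>. \<forall>r \<phi>. ode_sol ode (fsem Q) \<nu> r \<phi> \<longrightarrow> \<phi> r \<in> X}"
| "win (Choice \<alpha> \<beta>) X = win \<alpha> X \<union> win \<beta> X"
| "win (DChoice \<alpha> \<beta>) X = win \<alpha> X \<inter> win \<beta> X"
| "win (Seq \<alpha> \<beta>) X = win \<alpha> (win \<beta> X)"
| "win (Loop \<alpha>) X = lfp (\<lambda>Z. X \<union> win \<alpha> Z)"
| "win (DLoop \<alpha>) X = gfp (\<lambda>Z. X \<inter> win \<alpha> Z)"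
| "fsem (FGeq a b) = {\<nu>. tsem a \<nu> \<ge> tsem b \<nu>}"
| "fsem (FGt a b) = {\<nu>. tsem a \<nu> > tsem b \<nu>}"
| "fsem (FEq a b) = {\<nu>. tsem a \<nu> = tsem b \<nu>}"
| "fsem (FNot p) = - fsem p"
| "fsem (FAnd p q) = fsem p \<inter> fsem q"
| "fsem (FOr p q) = fsem p \<union> fsem q"
| "fsem (FExists x p) = {\<nu>. \<exists>v. \<nu>(x := v) \<in> fsem p}"
| "fsem (FForall x p) = {\<nu>. \<forall>v. \<nu>(x := v) \<in> fsem p}"
| "fsem (FDia \<alpha> p) = win \<alpha> (fsem p)"

definition valid :: "fml \<Rightarrow> bool" where
  "valid p \<longleftrightarrow> (\<forall>\<nu>. \<nu> \<in> fsem p)"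

datatype lgame =
    LAssign nat var trm
  | LAssignAny nat var
  | LAssignDemon nat var
  | LTest nat fml
  | LDTest nat fml
  | LODE nat "(var \<times> trm) list" fml
  | LDODE nat "(var \<times> trm) list" fml
  | LChoice nat lgame lgame
  | LDChoice nat lgame lgame
  | LSeq nat lgame lgame
  | LLoop nat lgame
  | LDLoop nat lgame

datatype lbl = N nat | End

primrec lab :: "lgame \<Rightarrow> nat" where
  "lab (LAssign a x e) = a"
| "lab (LAssignAny a x) = a"
| "lab (LAssignDemon a x) = a"
| "lab (LTest a Q) = a"
| "lab (LDTest a Q) = a"
| "lab (LODE a ode Q) = a"
| "lab (LDODE a ode Q) = a"
| "lab (LChoice a g d) = a"
| "lab (LDChoice a g d) = a"
| "lab (LSeq a g d) = a"
| "lab (LLoop a g) = a"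
| "lab (LDLoop a g) = a"

primrec node_list :: "lgame \<Rightarrow> nat list" where
  "node_list (LAssign a x e) = [a]"
| "node_list (LAssignAny a x) = [a]"
| "node_list (LAssignDemon a x) = [a]"
| "node_list (LTest a Q) = [a]"
| "node_list (LDTest a Q) = [a]"
| "node_list (LODE a ode Q) = [a]"
| "node_list (LDODE a ode Q) = [a]"
| "node_list (LChoice a g d) = a # node_list g @ node_list d"
| "node_list (LDChoice a g d) = a # node_list g @ node_list d"
| "node_list (LSeq a g d) = a # node_list g @ node_list d"
| "node_list (LLoop a g) = a # node_list g"
| "node_list (LDLoop a g) = a # node_list g"

definition nodes :: "lgame \<Rightarrow> nat set" where
  "nodes \<alpha> = set (node_list \<alpha>)"

definition well_labelled :: "lgame \<Rightarrow> bool" where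
  "well_labelled \<alpha> \<longleftrightarrow> distinct (node_list \<alpha>)"

primrec erase :: "lgame \<Rightarrow> game" where
  "erase (LAssign a x e) = Assign x e"
| "erase (LAssignAny a x) = AssignAny x"
| "erase (LAssignDemon a x) = AssignDemon x"
| "erase (LTest a Q) = Test Q"
| "erase (LDTest a Q) = DTest Q"
| "erase (LODE a ode Q) = ODE ode Q"
| "erase (LDODE a ode Q) = DODE ode Q"
| "erase (LChoice a g d) = Choice (erase g) (erase d)"
| "erase (LDChoice a g d) = DChoice (erase g) (erase d)"
| "erase (LSeq a g d) = Seq (erase g) (erase d)"
| "erase (LLoop a g) = Loop (erase g)"
| "erase (LDLoop a g) = DLoop (erase g)"

text \<open>suffix b alpha (only meaningful for b in nodes alpha).\<close>
fun suffix :: "nat \<Rightarrow> lgame \<Rightarrow> game" where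
  "suffix b (LChoice a g d) =
     (if b = a then erase (LChoice a g d) else if b \<in> nodes g then suffix b g else suffix b d)"
| "suffix b (LDChoice a g d) =
     (if b = a then erase (LDChoice a g d) else if b \<in> nodes g then suffix b g else suffix b d)"
| "suffix b (LSeq a g d) =
     (if b = a then erase (LSeq a g d)
      else if b \<in> nodes g then Seq (suffix b g) (erase d) else suffix b d)"
| "suffix b (LLoop a g) =
     (if b = a then erase (LLoop a g) else Seq (suffix b g) (erase (LLoop a g)))"
| "suffix b (LDLoop a g) =
     (if b = a then erase (LDLoop a g) else Seq (suffix b g) (erase (LDLoop a g)))"
| "suffix b \<alpha> = erase \<alpha>"

type_synonym smap = "lbl \<Rightarrow> fml"

primrec proj_ang :: "lgame \<Rightarrow> smap \<Rightarrow> game" where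
  "proj_ang (LAssign a x e) S = Assign x e"
| "proj_ang (LAssignAny a x) S = Seq (AssignAny x) (Test (S End))"
| "proj_ang (LAssignDemon a x) S = AssignDemon x"
| "proj_ang (LTest a Q) S = Test Q"
| "proj_ang (LDTest a Q) S = DTest Q"
| "proj_ang (LODE a ode Q) S = Seq (ODE ode Q) (Test (S End))"
| "proj_ang (LDODE a ode Q) S = DODE ode Q"
| "proj_ang (LChoice a g d) S =
     Choice (Seq (Test (S (N (lab g)))) (proj_ang g S)) (Seq (Test (S (N (lab d)))) (proj_ang d S))"
| "proj_ang (LDChoice a g d) S = DChoice (proj_ang g S) (proj_ang d S)"
| "proj_ang (LSeq a g d) S = Seq (proj_ang g (S(End := S (N (lab d))))) (proj_ang d S)"
| "proj_ang (LLoop a g) S =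
     Seq (Loop (Seq (Test (S (N (lab g)))) (proj_ang g (S(End := S (N a)))))) (Test (S End))"
| "proj_ang (LDLoop a g) S = DLoop (proj_ang g (S(End := S (N a))))"

primrec proj_dem :: "lgame \<Rightarrow> smap \<Rightarrow> game" where
  "proj_dem (LAssign a x e) S = Assign x e"
| "proj_dem (LAssignAny a x) S = AssignAny x"
| "proj_dem (LAssignDemon a x) S = Seq (AssignDemon x) (DTest (S End))"
| "proj_dem (LTest a Q) S = Test Q"
| "proj_dem (LDTest a Q) S = DTest Q"
| "proj_dem (LODE a ode Q) S = ODE ode Q"
| "proj_dem (LDODE a ode Q) S = Seq (DODE ode Q) (DTest (S End))"
| "proj_dem (LChoice a g d) S = Choice (proj_dem g S) (proj_dem d S)"
| "proj_dem (LDChoice a g d) S =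
     DChoice (Seq (DTest (S (N (lab g)))) (proj_dem g S)) (Seq (DTest (S (N (lab d)))) (proj_dem d S))"
| "proj_dem (LSeq a g d) S = Seq (proj_dem g (S(End := S (N (lab d))))) (proj_dem d S)"
| "proj_dem (LLoop a g) S = Loop (proj_dem g (S(End := S (N a))))"
| "proj_dem (LDLoop a g) S =
     Seq (DLoop (Seq (DTest (S (N (lab g))))
                     (proj_dem g (S(End := FOr (S (N (lab g))) (S End))))))
         (DTest (S End))"

definition ang_subvalue :: "smap \<Rightarrow> lgame \<Rightarrow> bool" where
  "ang_subvalue S \<alpha> \<longleftrightarrow> (\<forall>b\<in>nodes \<alpha>. valid (Imp (S (N b)) (FDia (suffix b \<alpha>) (S End))))"

definition dem_subvalue :: "smap \<Rightarrow> lgame \<Rightarrow> bool" where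
  "dem_subvalue S \<alpha> \<longleftrightarrow> (\<forall>b\<in>nodes \<alpha>. valid (Imp (S (N b)) (Box (suffix b \<alpha>) (S End))))"

primrec ind_ang :: "smap \<Rightarrow> lgame \<Rightarrow> bool" where
  "ind_ang S (LAssign a x e) = valid (Imp (S (N a)) (FDia (Assign x e) (S End)))"
| "ind_ang S (LAssignAny a x) = valid (Imp (S (N a)) (FDia (AssignAny x) (S End)))"
| "ind_ang S (LAssignDemon a x) = valid (Imp (S (N a)) (FDia (AssignDemon x) (S End)))"
| "ind_ang S (LTest a Q) = valid (Imp (S (N a)) (FDia (Test Q) (S End)))"
| "ind_ang S (LDTest a Q) = valid (Imp (S (N a)) (FDia (DTest Q) (S End)))"
| "ind_ang S (LODE a ode Q) = valid (Imp (S (N a)) (FDia (ODE ode Q) (S End)))"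
| "ind_ang S (LDODE a ode Q) = valid (Imp (S (N a)) (FDia (DODE ode Q) (S End)))"
| "ind_ang S (LChoice a g d) =
     (valid (Imp (S (N a)) (FOr (S (N (lab g))) (S (N (lab d))))) \<and> ind_ang S g \<and> ind_ang S d)"
| "ind_ang S (LDChoice a g d) =
     (valid (Imp (S (N a)) (FAnd (S (N (lab g))) (S (N (lab d))))) \<and> ind_ang S g \<and> ind_ang S d)"
| "ind_ang S (LSeq a g d) =
     (valid (Imp (S (N a)) (S (N (lab g)))) \<and> ind_ang (S(End := S (N (lab d)))) g \<and> ind_ang S d)"
| "ind_ang S (LLoop a g) =
     (valid (Imp (S (N a)) (FDia (proj_ang (LLoop a g) S) (S End))) \<and> ind_ang (S(End := S (N a))) g)"
| "ind_ang S (LDLoop a g) =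
     (valid (Imp (S (N a)) (FAnd (S (N (lab g))) (S End))) \<and> ind_ang (S(End := S (N a))) g)"

primrec ind_dem :: "smap \<Rightarrow> lgame \<Rightarrow> bool" where
  "ind_dem S (LAssign a x e) = valid (Imp (S (N a)) (Box (Assign x e) (S End)))"
| "ind_dem S (LAssignAny a x) = valid (Imp (S (N a)) (Box (AssignAny x) (S End)))"
| "ind_dem S (LAssignDemon a x) = valid (Imp (S (N a)) (Box (AssignDemon x) (S End)))"
| "ind_dem S (LTest a Q) = valid (Imp (S (N a)) (Box (Test Q) (S End)))"
| "ind_dem S (LDTest a Q) = valid (Imp (S (N a)) (Box (DTest Q) (S End)))"
| "ind_dem S (LODE a ode Q) = valid (Imp (S (N a)) (Box (ODE ode Q) (S End)))"
| "ind_dem S (LDODE a ode Q) = valid (Imp (S (N a)) (Box (DODE ode Q) (S End)))"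
| "ind_dem S (LChoice a g d) =
     (valid (Imp (S (N a)) (FAnd (S (N (lab g))) (S (N (lab d))))) \<and> ind_dem S g \<and> ind_dem S d)"
| "ind_dem S (LDChoice a g d) =
     (valid (Imp (S (N a)) (FOr (S (N (lab g))) (S (N (lab d))))) \<and> ind_dem S g \<and> ind_dem S d)"
| "ind_dem S (LSeq a g d) =
     (valid (Imp (S (N a)) (S (N (lab g)))) \<and> ind_dem (S(End := S (N (lab d)))) g \<and> ind_dem S d)"
| "ind_dem S (LLoop a g) =
     (valid (Imp (S (N a)) (FAnd (S End) (S (N (lab g))))) \<and> ind_dem (S(End := S (N a))) g)"
| "ind_dem S (LDLoop a g) =
     (valid (Imp (S (N a)) (Box (proj_dem (LDLoop a g) S) (S End))) \<and> ind_dem (S(End := S (N a))) g)"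

end

theory Submission
  imports Defs
begin

lemma valid_Imp: "valid (Imp p q) = (fsem p \<subseteq> fsem q)"
  by (auto simp: valid_def Imp_def)

lemma fsem_Box: "fsem (Box a p) = - win a (- fsem p)"
  by (simp add: Box_def)

lemma win_mono: "X \<subseteq> Y \<Longrightarrow> win \<alpha> X \<subseteq> win \<alpha> Y"
proof (induction \<alpha> arbitrary: X Y)
  case (Choice \<alpha>1 \<alpha>2) then show ?case by (metis Un_mono win.simps(8))
next
  case (DChoice \<alpha>1 \<alpha>2) then show ?case by (metis Int_mono win.simps(9))
qed (auto intro!: lfp_mono gfp_mono)

lemma proj_ang_sub: "win (proj_ang \<alpha> S) X \<subseteq> win (erase \<alpha>) X"
proof (induction \<alpha> arbitrary: S X)
  case (LChoice a g d)
  have "win (proj_ang g S) X \<subseteq> win (erase g) X" "win (proj_ang d S) X \<subseteq> win (erase d) X" by (rule LChoice.IH)+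
  then show ?case by (simp only: proj_ang.simps erase.simps win.simps(8) win.simps(10) win.simps(4)) blast
next
  case (LDChoice a g d)
  have "win (proj_ang g S) X \<subseteq> win (erase g) X" "win (proj_ang d S) X \<subseteq> win (erase d) X" by (rule LDChoice.IH)+
  then show ?case by (simp only: proj_ang.simps erase.simps win.simps(9) win.simps(10) win.simps(4)) blast
next
  case (LSeq a g d)
  have "win (proj_ang g (S(End := S (N (lab d))))) (win (proj_ang d S) X)
     \<subseteq> win (erase g) (win (proj_ang d S) X)" by (rule LSeq.IH(1))
  also have "\<dots> \<subseteq> win (erase g) (win (erase d) X)" by (rule win_mono, rule LSeq.IH(2))
  finally show ?case by (simp only: proj_ang.simps erase.simps win.simps(10))
next
  case (LLoop a g)
  let ?A = "Loop (Seq (Test (S (N (lab g)))) (proj_ang g (S(End := S (N a)))))"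
  have h: "\<And>Z. win (proj_ang g (S(End := S (N a)))) Z \<subseteq> win (erase g) Z" by (rule LLoop.IH)
  have "win ?A (fsem (S End) \<inter> X) \<subseteq> win ?A X" by (rule win_mono) auto
  also have "\<dots> \<subseteq> win (Loop (erase g)) X"
    using h by (simp; intro lfp_mono Un_mono subset_refl; blast)
  finally show ?case by simp
next
  case (LDLoop a g)
  have h: "\<And>Z. win (proj_ang g (S(End := S (N a)))) Z \<subseteq> win (erase g) Z" by (rule LDLoop.IH)
  show ?case by (simp; intro gfp_mono Int_mono subset_refl h)
next
  case (LODE a ode Q)
  have "win (ODE ode Q) (fsem (S End) \<inter> X) \<subseteq> win (ODE ode Q) X" by (rule win_mono) blast
  then show ?case by (simp only: proj_ang.simps erase.simps win.simps(10) win.simps(4))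
next
  case (LAssignAny a x)
  have "win (AssignAny x) (fsem (S End) \<inter> X) \<subseteq> win (AssignAny x) X" by (rule win_mono) blast
  then show ?case by (simp only: proj_ang.simps erase.simps win.simps(10) win.simps(4))
qed (simp_all only: proj_ang.simps erase.simps subset_refl)

lemma proj_dem_sup: "win (erase \<alpha>) X \<subseteq> win (proj_dem \<alpha> S) X"
proof (induction \<alpha> arbitrary: S X)
  case (LChoice a g d)
  have "win (erase g) X \<subseteq> win (proj_dem g S) X" "win (erase d) X \<subseteq> win (proj_dem d S) X" by (rule LChoice.IH)+
  then show ?case by (simp only: proj_dem.simps erase.simps win.simps(8) win.simps(10) win.simps(5)) blast
next
  case (LDChoice a g d)
  have "win (erase g) X \<subseteq> win (proj_dem g S) X" "win (erase d) X \<subseteq> win (proj_dem d S) X" by (rule LDChoice.IH)+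
  then show ?case by (simp only: proj_dem.simps erase.simps win.simps(9) win.simps(10) win.simps(5)) blast
next
  case (LSeq a g d)
  have "win (erase g) (win (erase d) X) \<subseteq> win (erase g) (win (proj_dem d S) X)"
    by (rule win_mono, rule LSeq.IH(2))
  also have "\<dots> \<subseteq> win (proj_dem g (S(End := S (N (lab d))))) (win (proj_dem d S) X)"
    by (rule LSeq.IH(1))
  finally show ?case by (simp only: proj_dem.simps erase.simps win.simps(10))
next
  case (LLoop a g)
  have h: "\<And>Z. win (erase g) Z \<subseteq> win (proj_dem g (S(End := S (N a)))) Z" by (rule LLoop.IH)
  show ?case by (simp; intro lfp_mono Un_mono subset_refl h)
next
  case (LDLoop a g)
  let ?A = "DLoop (Seq (DTest (S (N (lab g)))) (proj_dem g (S(End := FOr (S (N (lab g))) (S End)))))"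
  have h: "\<And>Z. win (erase g) Z \<subseteq> win (proj_dem g (S(End := FOr (S (N (lab g))) (S End)))) Z" by (rule LDLoop.IH)
  have "win (DLoop (erase g)) X \<subseteq> win ?A X"
    using h by (simp; intro gfp_mono Int_mono subset_refl; blast)
  also have "\<dots> \<subseteq> win ?A {\<nu>. \<nu> \<in> fsem (S End) \<longrightarrow> \<nu> \<in> X}" by (rule win_mono) auto
  finally show ?case by simp
next
  case (LAssignDemon a x)
  have "win (AssignDemon x) X \<subseteq> win (AssignDemon x) {\<nu>. \<nu> \<in> fsem (S End) \<longrightarrow> \<nu> \<in> X}" by (rule win_mono) blast
  then show ?case by (simp only: proj_dem.simps erase.simps win.simps(10) win.simps(5))
next
  case (LDODE a ode Q)
  have "win (DODE ode Q) X \<subseteq> win (DODE ode Q) {\<nu>. \<nu> \<in> fsem (S End) \<longrightarrow> \<nu> \<in> X}" by (rule win_mono) blast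
  then show ?case by (simp only: proj_dem.simps erase.simps win.simps(10) win.simps(5))
qed (simp_all only: proj_dem.simps erase.simps subset_refl)

lemma suffix_lab: "suffix (lab \<alpha>) \<alpha> = erase \<alpha>"
  by (cases \<alpha>) auto

lemma lab_nodes: "lab \<alpha> \<in> nodes \<alpha>"
  by (cases \<alpha>) (auto simp: nodes_def)


lemma nodes_simps:
  "nodes (LChoice a g d) = insert a (nodes g \<union> nodes d)"
  "nodes (LDChoice a g d) = insert a (nodes g \<union> nodes d)"
  "nodes (LSeq a g d) = insert a (nodes g \<union> nodes d)"
  "nodes (LLoop a g) = insert a (nodes g)"
  "nodes (LDLoop a g) = insert a (nodes g)"
  by (auto simp: nodes_def)

lemma wl2:
  assumes "well_labelled (LChoice a g d) \<or> well_labelled (LDChoice a g d) \<or> well_labelled (LSeq a g d)"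
  shows "well_labelled g" "well_labelled d" "a \<notin> nodes g" "a \<notin> nodes d" "nodes g \<inter> nodes d = {}"
  using assms by (auto simp: well_labelled_def nodes_def)

lemma wl1:
  assumes "well_labelled (LLoop a g) \<or> well_labelled (LDLoop a g)"
  shows "well_labelled g" "a \<notin> nodes g"
  using assms by (auto simp: well_labelled_def nodes_def)

lemma ang_main:
  "well_labelled \<alpha> \<Longrightarrow> ind_ang S \<alpha> \<Longrightarrow> b \<in> nodes \<alpha> \<Longrightarrow>
   fsem (S (N b)) \<subseteq> win (suffix b \<alpha>) (fsem (S End))"
proof (induction \<alpha> arbitrary: S b)
  case (LChoice a g d)
  note w = wl2[of a g d, OF disjI1, OF LChoice.prems(1)]
  have ig: "ind_ang S g" and id: "ind_ang S d"
    and root: "fsem (S (N a)) \<subseteq> fsem (S (N (lab g))) \<union> fsem (S (N (lab d)))"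
    using LChoice.prems(2) by (simp_all add: valid_Imp)
  have IHg: "fsem (S (N c)) \<subseteq> win (suffix c g) (fsem (S End))" if "c \<in> nodes g" for c
    using LChoice.IH(1)[OF w(1) ig that] .
  have IHd: "fsem (S (N c)) \<subseteq> win (suffix c d) (fsem (S End))" if "c \<in> nodes d" for c
    using LChoice.IH(2)[OF w(2) id that] .
  have rg: "fsem (S (N (lab g))) \<subseteq> win (erase g) (fsem (S End))"
    using IHg[OF lab_nodes] by (simp only: suffix_lab)
  have rd: "fsem (S (N (lab d))) \<subseteq> win (erase d) (fsem (S End))"
    using IHd[OF lab_nodes] by (simp only: suffix_lab)
  consider "b = a" | "b \<in> nodes g" | "b \<in> nodes d" using LChoice.prems(3) by (auto simp: nodes_simps)
  then show ?case
  proof cases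
    case 1 then show ?thesis using root rg rd by auto
  next
    case 2 then have "b \<noteq> a" using w by auto
    then show ?thesis using IHg[OF 2] 2 by simp
  next
    case 3 then have "b \<noteq> a" "b \<notin> nodes g" using w by auto
    then show ?thesis using IHd[OF 3] by simp
  qed
next
  case (LDChoice a g d)
  note w = wl2[of a g d, OF disjI2, OF disjI1, OF LDChoice.prems(1)]
  have ig: "ind_ang S g" and id: "ind_ang S d"
    and root: "fsem (S (N a)) \<subseteq> fsem (S (N (lab g))) \<inter> fsem (S (N (lab d)))"
    using LDChoice.prems(2) by (simp_all add: valid_Imp)
  have IHg: "fsem (S (N c)) \<subseteq> win (suffix c g) (fsem (S End))" if "c \<in> nodes g" for c
    using LDChoice.IH(1)[OF w(1) ig that] .
  have IHd: "fsem (S (N c)) \<subseteq> win (suffix c d) (fsem (S End))" if "c \<in> nodes d" for c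
    using LDChoice.IH(2)[OF w(2) id that] .
  have rg: "fsem (S (N (lab g))) \<subseteq> win (erase g) (fsem (S End))"
    using IHg[OF lab_nodes] by (simp only: suffix_lab)
  have rd: "fsem (S (N (lab d))) \<subseteq> win (erase d) (fsem (S End))"
    using IHd[OF lab_nodes] by (simp only: suffix_lab)
  consider "b = a" | "b \<in> nodes g" | "b \<in> nodes d" using LDChoice.prems(3) by (auto simp: nodes_simps)
  then show ?case
  proof cases
    case 1 then show ?thesis using root rg rd by auto
  next
    case 2 then have "b \<noteq> a" using w by auto
    then show ?thesis using IHg[OF 2] 2 by simp
  next
    case 3 then have "b \<noteq> a" "b \<notin> nodes g" using w by auto
    then show ?thesis using IHd[OF 3] by simp
  qed
next
  case (LSeq a g d)
  note w = wl2[of a g d, OF disjI2, OF disjI2, OF LSeq.prems(1)]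
  let ?S' = "S(End := S (N (lab d)))"
  have ig: "ind_ang ?S' g" and id: "ind_ang S d"
    and root: "fsem (S (N a)) \<subseteq> fsem (S (N (lab g)))"
    using LSeq.prems(2) by (simp_all add: valid_Imp)
  have IHg: "fsem (S (N c)) \<subseteq> win (suffix c g) (fsem (S (N (lab d))))" if "c \<in> nodes g" for c
    using LSeq.IH(1)[OF w(1) ig that] by simp
  have IHd: "fsem (S (N c)) \<subseteq> win (suffix c d) (fsem (S End))" if "c \<in> nodes d" for c
    using LSeq.IH(2)[OF w(2) id that] .
  have rd: "fsem (S (N (lab d))) \<subseteq> win (erase d) (fsem (S End))"
    using IHd[OF lab_nodes] by (simp only: suffix_lab)
  have IHg': "fsem (S (N c)) \<subseteq> win (suffix c g) (win (erase d) (fsem (S End)))" if "c \<in> nodes g" for c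
    using IHg[OF that] win_mono[OF rd] by (rule subset_trans)
  consider "b = a" | "b \<in> nodes g" | "b \<in> nodes d" using LSeq.prems(3) by (auto simp: nodes_simps)
  then show ?case
  proof cases
    case 1
    have "fsem (S (N a)) \<subseteq> win (erase g) (win (erase d) (fsem (S End)))"
      using root IHg'[OF lab_nodes] by (simp only: suffix_lab)
    then show ?thesis using 1 by simp
  next
    case 2 then have "b \<noteq> a" using w by auto
    then show ?thesis using IHg'[OF 2] 2 by simp
  next
    case 3 then have "b \<noteq> a" "b \<notin> nodes g" using w by auto
    then show ?thesis using IHd[OF 3] by simp
  qed
next
  case (LLoop a g)
  note w = wl1[of a g, OF disjI1, OF LLoop.prems(1)]
  let ?S' = "S(End := S (N a))"
  have ig: "ind_ang ?S' g"
    and root0: "fsem (S (N a)) \<subseteq> win (proj_ang (LLoop a g) S) (fsem (S End))"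
    using LLoop.prems(2) by (simp_all only: ind_ang.simps valid_Imp fsem.simps)
  have root: "fsem (S (N a)) \<subseteq> win (erase (LLoop a g)) (fsem (S End))"
    using root0 proj_ang_sub by (rule subset_trans)
  have IHg: "fsem (S (N c)) \<subseteq> win (suffix c g) (fsem (S (N a)))" if "c \<in> nodes g" for c
    using LLoop.IH[OF w(1) ig that] by simp
  have IHg': "fsem (S (N c)) \<subseteq> win (suffix c g) (win (erase (LLoop a g)) (fsem (S End)))" if "c \<in> nodes g" for c
    using IHg[OF that] win_mono[OF root] by (rule subset_trans)
  consider "b = a" | "b \<in> nodes g" using LLoop.prems(3) by (auto simp: nodes_simps)
  then show ?case
  proof cases
    case 1 then show ?thesis using root by (simp only: suffix.simps simp_thms(6) if_True)
  next
    case 2 then have "b \<noteq> a" using w by auto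
    then show ?thesis using IHg'[OF 2] by (simp only: suffix.simps if_False win.simps(10))
  qed
next
  case (LDLoop a g)
  note w = wl1[of a g, OF disjI2, OF LDLoop.prems(1)]
  let ?S' = "S(End := S (N a))"
  have ig: "ind_ang ?S' g"
    and root0: "fsem (S (N a)) \<subseteq> fsem (S (N (lab g))) \<inter> fsem (S End)"
    using LDLoop.prems(2) by (simp_all add: valid_Imp)
  have IHg: "fsem (S (N c)) \<subseteq> win (suffix c g) (fsem (S (N a)))" if "c \<in> nodes g" for c
    using LDLoop.IH[OF w(1) ig that] by simp
  have "fsem (S (N a)) \<subseteq> fsem (S End) \<inter> win (erase g) (fsem (S (N a)))"
    using root0 IHg[OF lab_nodes] by (auto simp only: suffix_lab)
  then have root: "fsem (S (N a)) \<subseteq> win (erase (LDLoop a g)) (fsem (S End))"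
    by (simp only: erase.simps win.simps(12)) (rule gfp_upperbound)
  have IHg': "fsem (S (N c)) \<subseteq> win (suffix c g) (win (erase (LDLoop a g)) (fsem (S End)))" if "c \<in> nodes g" for c
    using IHg[OF that] win_mono[OF root] by (rule subset_trans)
  consider "b = a" | "b \<in> nodes g" using LDLoop.prems(3) by (auto simp: nodes_simps)
  then show ?case
  proof cases
    case 1 then show ?thesis using root by (simp only: suffix.simps simp_thms(6) if_True)
  next
    case 2 then have "b \<noteq> a" using w by auto
    then show ?thesis using IHg'[OF 2] by (simp only: suffix.simps if_False win.simps(10))
  qed
qed (auto simp: nodes_def valid_Imp)


lemma bw_mono: "X \<subseteq> Y \<Longrightarrow> - win \<alpha> (- X) \<subseteq> - win \<alpha> (- Y)"
  using win_mono[of "- Y" "- X" \<alpha>] by blast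

lemma dem_main:
  "well_labelled \<alpha> \<Longrightarrow> ind_dem S \<alpha> \<Longrightarrow> b \<in> nodes \<alpha> \<Longrightarrow>
   fsem (S (N b)) \<subseteq> - win (suffix b \<alpha>) (- fsem (S End))"
proof (induction \<alpha> arbitrary: S b)
  case (LChoice a g d)
  note w = wl2[of a g d, OF disjI1, OF LChoice.prems(1)]
  have ig: "ind_dem S g" and id: "ind_dem S d"
    and root: "fsem (S (N a)) \<subseteq> fsem (S (N (lab g))) \<inter> fsem (S (N (lab d)))"
    using LChoice.prems(2) by (simp_all add: valid_Imp)
  have IHg: "fsem (S (N c)) \<subseteq> - win (suffix c g) (- fsem (S End))" if "c \<in> nodes g" for c
    using LChoice.IH(1)[OF w(1) ig that] .
  have IHd: "fsem (S (N c)) \<subseteq> - win (suffix c d) (- fsem (S End))" if "c \<in> nodes d" for c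
    using LChoice.IH(2)[OF w(2) id that] .
  have rg: "fsem (S (N (lab g))) \<subseteq> - win (erase g) (- fsem (S End))"
    using IHg[OF lab_nodes] by (simp only: suffix_lab)
  have rd: "fsem (S (N (lab d))) \<subseteq> - win (erase d) (- fsem (S End))"
    using IHd[OF lab_nodes] by (simp only: suffix_lab)
  consider "b = a" | "b \<in> nodes g" | "b \<in> nodes d" using LChoice.prems(3) by (auto simp: nodes_simps)
  then show ?case
  proof cases
    case 1 then show ?thesis using root rg rd by auto
  next
    case 2 then have "b \<noteq> a" using w by auto
    then show ?thesis using IHg[OF 2] 2 by simp
  next
    case 3 then have "b \<noteq> a" "b \<notin> nodes g" using w by auto
    then show ?thesis using IHd[OF 3] by simp
  qed
next
  case (LDChoice a g d)
  note w = wl2[of a g d, OF disjI2, OF disjI1, OF LDChoice.prems(1)]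
  have ig: "ind_dem S g" and id: "ind_dem S d"
    and root: "fsem (S (N a)) \<subseteq> fsem (S (N (lab g))) \<union> fsem (S (N (lab d)))"
    using LDChoice.prems(2) by (simp_all add: valid_Imp)
  have IHg: "fsem (S (N c)) \<subseteq> - win (suffix c g) (- fsem (S End))" if "c \<in> nodes g" for c
    using LDChoice.IH(1)[OF w(1) ig that] .
  have IHd: "fsem (S (N c)) \<subseteq> - win (suffix c d) (- fsem (S End))" if "c \<in> nodes d" for c
    using LDChoice.IH(2)[OF w(2) id that] .
  have rg: "fsem (S (N (lab g))) \<subseteq> - win (erase g) (- fsem (S End))"
    using IHg[OF lab_nodes] by (simp only: suffix_lab)
  have rd: "fsem (S (N (lab d))) \<subseteq> - win (erase d) (- fsem (S End))"
    using IHd[OF lab_nodes] by (simp only: suffix_lab)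
  consider "b = a" | "b \<in> nodes g" | "b \<in> nodes d" using LDChoice.prems(3) by (auto simp: nodes_simps)
  then show ?case
  proof cases
    case 1 then show ?thesis using root rg rd by auto
  next
    case 2 then have "b \<noteq> a" using w by auto
    then show ?thesis using IHg[OF 2] 2 by simp
  next
    case 3 then have "b \<noteq> a" "b \<notin> nodes g" using w by auto
    then show ?thesis using IHd[OF 3] by simp
  qed
next
  case (LSeq a g d)
  note w = wl2[of a g d, OF disjI2, OF disjI2, OF LSeq.prems(1)]
  let ?S' = "S(End := S (N (lab d)))"
  have ig: "ind_dem ?S' g" and id: "ind_dem S d"
    and root: "fsem (S (N a)) \<subseteq> fsem (S (N (lab g)))"
    using LSeq.prems(2) by (simp_all add: valid_Imp)
  have IHg: "fsem (S (N c)) \<subseteq> - win (suffix c g) (- fsem (S (N (lab d))))" if "c \<in> nodes g" for c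
    using LSeq.IH(1)[OF w(1) ig that] by simp
  have IHd: "fsem (S (N c)) \<subseteq> - win (suffix c d) (- fsem (S End))" if "c \<in> nodes d" for c
    using LSeq.IH(2)[OF w(2) id that] .
  have rd: "fsem (S (N (lab d))) \<subseteq> - win (erase d) (- fsem (S End))"
    using IHd[OF lab_nodes] by (simp only: suffix_lab)
  have IHg': "fsem (S (N c)) \<subseteq> - win (suffix c g) (win (erase d) (- fsem (S End)))" if "c \<in> nodes g" for c
  proof -
    have "fsem (S (N c)) \<subseteq> - win (suffix c g) (- (- win (erase d) (- fsem (S End))))"
      using IHg[OF that] bw_mono[OF rd] by (rule subset_trans)
    then show ?thesis by simp
  qed
  consider "b = a" | "b \<in> nodes g" | "b \<in> nodes d" using LSeq.prems(3) by (auto simp: nodes_simps)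
  then show ?case
  proof cases
    case 1
    have "fsem (S (N a)) \<subseteq> - win (erase g) (win (erase d) (- fsem (S End)))"
      using root IHg'[OF lab_nodes] by (simp only: suffix_lab)
    then show ?thesis using 1 by simp
  next
    case 2 then have "b \<noteq> a" using w by auto
    then show ?thesis using IHg'[OF 2] 2 by simp
  next
    case 3 then have "b \<noteq> a" "b \<notin> nodes g" using w by auto
    then show ?thesis using IHd[OF 3] by simp
  qed
next
  case (LLoop a g)
  note w = wl1[of a g, OF disjI1, OF LLoop.prems(1)]
  let ?S' = "S(End := S (N a))"
  have ig: "ind_dem ?S' g"
    and root0: "fsem (S (N a)) \<subseteq> fsem (S End) \<inter> fsem (S (N (lab g)))"
    using LLoop.prems(2) by (simp_all add: valid_Imp)
  have IHg: "fsem (S (N c)) \<subseteq> - win (suffix c g) (- fsem (S (N a)))" if "c \<in> nodes g" for c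
    using LLoop.IH[OF w(1) ig that] by simp
  have "- fsem (S End) \<union> win (erase g) (- fsem (S (N a))) \<subseteq> - fsem (S (N a))"
    using root0 IHg[OF lab_nodes] by (auto simp only: suffix_lab)
  then have "win (erase (LLoop a g)) (- fsem (S End)) \<subseteq> - fsem (S (N a))"
    by (simp only: erase.simps win.simps(11)) (rule lfp_lowerbound)
  then have root: "fsem (S (N a)) \<subseteq> - win (erase (LLoop a g)) (- fsem (S End))" by blast
  have IHg': "fsem (S (N c)) \<subseteq> - win (suffix c g) (win (erase (LLoop a g)) (- fsem (S End)))" if "c \<in> nodes g" for c
  proof -
    have "fsem (S (N c)) \<subseteq> - win (suffix c g) (- (- win (erase (LLoop a g)) (- fsem (S End))))"
      using IHg[OF that] bw_mono[OF root] by (rule subset_trans)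
    then show ?thesis by simp
  qed
  consider "b = a" | "b \<in> nodes g" using LLoop.prems(3) by (auto simp: nodes_simps)
  then show ?case
  proof cases
    case 1 then show ?thesis using root by (simp only: suffix.simps simp_thms(6) if_True)
  next
    case 2 then have "b \<noteq> a" using w by auto
    then show ?thesis using IHg'[OF 2] by (simp only: suffix.simps if_False win.simps(10))
  qed
next
  case (LDLoop a g)
  note w = wl1[of a g, OF disjI2, OF LDLoop.prems(1)]
  let ?S' = "S(End := S (N a))"
  have ig: "ind_dem ?S' g"
    and root0: "fsem (S (N a)) \<subseteq> - win (proj_dem (LDLoop a g) S) (- fsem (S End))"
    using LDLoop.prems(2) by (simp_all only: ind_dem.simps valid_Imp fsem_Box fsem.simps)
  have root: "fsem (S (N a)) \<subseteq> - win (erase (LDLoop a g)) (- fsem (S End))"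
    using root0 proj_dem_sup[of "LDLoop a g" "- fsem (S End)" S] by blast
  have IHg: "fsem (S (N c)) \<subseteq> - win (suffix c g) (- fsem (S (N a)))" if "c \<in> nodes g" for c
    using LDLoop.IH[OF w(1) ig that] by simp
  have IHg': "fsem (S (N c)) \<subseteq> - win (suffix c g) (win (erase (LDLoop a g)) (- fsem (S End)))" if "c \<in> nodes g" for c
  proof -
    have "fsem (S (N c)) \<subseteq> - win (suffix c g) (- (- win (erase (LDLoop a g)) (- fsem (S End))))"
      using IHg[OF that] bw_mono[OF root] by (rule subset_trans)
    then show ?thesis by simp
  qed
  consider "b = a" | "b \<in> nodes g" using LDLoop.prems(3) by (auto simp: nodes_simps)
  then show ?case
  proof cases
    case 1 then show ?thesis using root by (simp only: suffix.simps simp_thms(6) if_True)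
  next
    case 2 then have "b \<noteq> a" using w by auto
    then show ?thesis using IHg'[OF 2] by (simp only: suffix.simps if_False win.simps(10))
  qed
qed (auto simp: nodes_def valid_Imp fsem_Box)

theorem mainTheorem3:
  fixes \<alpha> :: lgame and S :: smap
  assumes "well_labelled \<alpha>"
  shows "(ind_ang S \<alpha> \<longrightarrow> ang_subvalue S \<alpha>) \<and> (ind_dem S \<alpha> \<longrightarrow> dem_subvalue S \<alpha>)"
proof (intro conjI impI)
  assume "ind_ang S \<alpha>"
  then show "ang_subvalue S \<alpha>"
    using ang_main[OF assms] by (simp add: ang_subvalue_def valid_Imp)
next
  assume "ind_dem S \<alpha>"
  then show "dem_subvalue S \<alpha>"
    using dem_main[OF assms] by (simp add: dem_subvalue_def valid_Imp fsem_Box)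
qed

end
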